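(* Let $n\ge 2$ and let $K\subset\mathbb{R}^n$ be bounded and not contained in any $1$-dimensional linear subspace. Then (i) $K\in\mathcal{C}_e^n$ if and only if $K=\mathrm{cyl}(K)$; and (ii) $K^{\diamond\diamond}=\mathrm{cyl}(K)$.
   Context: For $x,y\in\mathbb{R}^n$ let $[x,y]=\sqrt{|x|^2|y|^2-(x\cdot y)^2}$. The sine polar body of $K$ is $K^{\diamond}=\{x\in\mathbb{R}^n:[x,y]\le1\text{ for all }y\in K\}$ and $K^{\diamond\diamond}=(K^{\diamond})^{\diamond}$. A closed solid cylinder is a set $C^{-}(u,r)=\{x\in\mathbb{R}^n:[x,u]\le r\}$ with $u\in S^{n-1}$, $r>0$. $\mathcal{C}_e^n$ is the class of origin-symmetric convex bodies in $\mathbb{R}^n$ that are intersections of closed solid cylinders. For a bounded set $E$ not contained in any $1$-dimensional subspace, its cylindrical hull $\mathrm{cyl}(E)$ is the intersection of all closed solid cylinders $C^{-}(u,r)$ containing $E$. *)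

theory Defs
  imports "HOL-Analysis.Analysis"
begin

definition sine_br :: "'a::euclidean_space \<Rightarrow> 'a \<Rightarrow> real" where
  "sine_br x y = sqrt ((norm x)\<^sup>2 * (norm y)\<^sup>2 - (x \<bullet> y)\<^sup>2)"

definition sine_polar :: "'a::euclidean_space set \<Rightarrow> 'a set" where
  "sine_polar K = {x. \<forall>y\<in>K. sine_br x y \<le> 1}"

definition solid_cyl :: "'a::euclidean_space \<Rightarrow> real \<Rightarrow> 'a set" where
  "solid_cyl u r = {x. sine_br x u \<le> r}"

definition closed_solid_cylinders :: "'a::euclidean_space set set" where
  "closed_solid_cylinders = {solid_cyl u r | u r. norm u = 1 \<and> r > 0}"

definition convex_body :: "'a::euclidean_space set \<Rightarrow> bool" where
  "convex_body K \<longleftrightarrow> compact K \<and> convex K \<and> interior K \<noteq> {}"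

definition Ce :: "'a::euclidean_space set set" where
  "Ce = {K. convex_body K \<and> uminus ` K = K \<and>
            (\<exists>F. F \<subseteq> closed_solid_cylinders \<and> K = \<Inter>F)}"

definition cyl_hull :: "'a::euclidean_space set \<Rightarrow> 'a set" where
  "cyl_hull E = \<Inter>{C \<in> closed_solid_cylinders. E \<subseteq> C}"

end

theory Submission
  imports Defs
begin

lemma sb_comm: "sine_br x y = sine_br y x"
  unfolding sine_br_def by (simp add: inner_commute mult.commute)

lemma sb_scale: "sine_br x (c *\<^sub>R y) = \<bar>c\<bar> * sine_br x y"
proof -
  have "(norm x)\<^sup>2 * (norm (c *\<^sub>R y))\<^sup>2 - (x \<bullet> (c *\<^sub>R y))\<^sup>2
        = c\<^sup>2 * ((norm x)\<^sup>2 * (norm y)\<^sup>2 - (x \<bullet> y)\<^sup>2)"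
    by (simp add: power_mult_distrib algebra_simps)
  then show ?thesis unfolding sine_br_def by (simp add: real_sqrt_mult)
qed

lemma sb_neg: "sine_br (-x) y = sine_br x y"
  unfolding sine_br_def by simp

lemma sb_zero: "sine_br x 0 = 0"
  unfolding sine_br_def by simp

lemma sb_eq: assumes "norm u = 1" shows "sine_br x u = norm (x - (x \<bullet> u) *\<^sub>R u)"
proof -
  have uu: "u \<bullet> u = 1" using assms by (simp add: norm_eq_sqrt_inner)
  have "(norm (x - (x \<bullet> u) *\<^sub>R u))\<^sup>2 = (norm x)\<^sup>2 - (x \<bullet> u)\<^sup>2"
    unfolding power2_norm_eq_inner
    by (simp add: inner_diff_left inner_diff_right uu power2_eq_square inner_commute algebra_simps)
  then have "sine_br x u = sqrt ((norm (x - (x \<bullet> u) *\<^sub>R u))\<^sup>2)"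
    unfolding sine_br_def using assms by simp
  then show ?thesis by simp
qed

lemma sb_le_norm: assumes "norm u = 1" shows "sine_br x u \<le> norm x"
proof -
  have "(norm x)\<^sup>2 * (norm u)\<^sup>2 - (x \<bullet> u)\<^sup>2 \<le> (norm x)\<^sup>2" using assms by simp
  then have "sine_br x u \<le> sqrt ((norm x)\<^sup>2)" unfolding sine_br_def by (rule real_sqrt_le_mono)
  then show ?thesis by simp
qed

lemma sb_cont: "continuous_on S (\<lambda>u. sine_br y u)"
  unfolding sine_br_def by (intro continuous_intros)

lemma cyl_alt:
  assumes "norm u = 1" "r > 0"
  shows "x \<in> solid_cyl u r \<longleftrightarrow> sine_br x ((1/r) *\<^sub>R u) \<le> 1"
  using assms by (simp add: solid_cyl_def sb_scale divide_le_eq)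

lemma cyl_convex: assumes "norm u = 1" shows "convex (solid_cyl u r)"
proof -
  have "solid_cyl u r = (\<lambda>x. x - (x \<bullet> u) *\<^sub>R u) -` cball 0 r"
    using assms by (auto simp: solid_cyl_def sb_eq)
  moreover have "linear (\<lambda>x. x - (x \<bullet> u) *\<^sub>R u)"
    by (auto simp: linear_iff inner_add_left scaleR_add_left algebra_simps)
  ultimately show ?thesis by (simp add: convex_linear_vimage)
qed

lemma cyl_closed: "closed (solid_cyl u r)"
proof -
  have "continuous_on UNIV (\<lambda>x. sine_br x u)"
    unfolding sine_br_def by (intro continuous_intros)
  then show ?thesis unfolding solid_cyl_def
    by (intro closed_Collect_le continuous_intros) auto
qed

lemma polar_polar: "sine_polar (sine_polar K) = cyl_hull K"
proof
  show "sine_polar (sine_polar K) \<subseteq> cyl_hull K"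
  proof
    fix x assume x: "x \<in> sine_polar (sine_polar K)"
    show "x \<in> cyl_hull K"
      unfolding cyl_hull_def closed_solid_cylinders_def
    proof (safe)
      fix u r assume u: "norm u = (1::real)" and r: "0 < r" and K: "K \<subseteq> solid_cyl u r"
      have "(1/r) *\<^sub>R u \<in> sine_polar K"
        unfolding sine_polar_def
      proof (safe)
        fix y assume "y \<in> K"
        then have "y \<in> solid_cyl u r" using K by blast
        then show "sine_br ((1/r) *\<^sub>R u) y \<le> 1" using cyl_alt[OF u r] sb_comm by metis
      qed
      then show "x \<in> solid_cyl u r" using x cyl_alt[OF u r] unfolding sine_polar_def by auto
    qed
  qed
next
  show "cyl_hull K \<subseteq> sine_polar (sine_polar K)"
  proof
    fix x assume x: "x \<in> cyl_hull K"
    show "x \<in> sine_polar (sine_polar K)"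
      unfolding sine_polar_def[of "sine_polar K"]
    proof (safe)
      fix z assume z: "z \<in> sine_polar K"
      show "sine_br x z \<le> 1"
      proof (cases "z = 0")
        case True then show ?thesis by (simp add: sb_zero)
      next
        case False
        define u where "u = (1 / norm z) *\<^sub>R z"
        define r where "r = 1 / norm z"
        have u: "norm u = 1" using False by (simp add: u_def)
        have r: "r > 0" using False by (simp add: r_def)
        have zu: "(1/r) *\<^sub>R u = z" using False by (simp add: u_def r_def)
        have "K \<subseteq> solid_cyl u r"
        proof
          fix y assume "y \<in> K"
          then have "sine_br z y \<le> 1" using z unfolding sine_polar_def by auto
          then show "y \<in> solid_cyl u r" using cyl_alt[OF u r] zu sb_comm by metis
        qed
        then have "solid_cyl u r \<in> {C \<in> closed_solid_cylinders. K \<subseteq> C}"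
          unfolding closed_solid_cylinders_def using u r by auto
        then have "x \<in> solid_cyl u r" using x unfolding cyl_hull_def by blast
        then show ?thesis using cyl_alt[OF u r] zu by simp
      qed
    qed
  qed
qed

lemma sb_nonneg: "norm u = 1 \<Longrightarrow> sine_br y u \<ge> 0"
  by (simp add: sb_eq)

lemma in_hull_cyl:
  assumes "x \<in> cyl_hull K" "norm u = 1" "r > 0" "K \<subseteq> solid_cyl u r"
  shows "x \<in> solid_cyl u r"
  using assms unfolding cyl_hull_def closed_solid_cylinders_def by blast

lemma hull_sym: "uminus ` cyl_hull K = cyl_hull K"
proof -
  have m: "- x \<in> cyl_hull K" if "x \<in> cyl_hull K" for x
  proof -
    have "-x \<in> solid_cyl u r" if "norm u = 1" "r > 0" "K \<subseteq> solid_cyl u r" for u r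
      using in_hull_cyl[OF \<open>x \<in> cyl_hull K\<close> that] by (simp add: solid_cyl_def sb_neg)
    then show ?thesis unfolding cyl_hull_def closed_solid_cylinders_def by blast
  qed
  show ?thesis
  proof
    show "uminus ` cyl_hull K \<subseteq> cyl_hull K" using m by auto
    show "cyl_hull K \<subseteq> uminus ` cyl_hull K"
    proof
      fix x assume "x \<in> cyl_hull K"
      then have "-x \<in> cyl_hull K" by (rule m)
      then show "x \<in> uminus ` cyl_hull K" by (metis image_eqI minus_minus)
    qed
  qed
qed

lemma hull_convex: "convex (cyl_hull K)"
  unfolding cyl_hull_def closed_solid_cylinders_def
  by (rule convex_Inter) (auto intro: cyl_convex)

lemma hull_closed: "closed (cyl_hull K)"
  unfolding cyl_hull_def closed_solid_cylinders_def
  by (rule closed_Inter) (auto intro: cyl_closed)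

lemma hull_bounded:
  fixes K :: "'a::euclidean_space set"
  assumes "DIM('a) \<ge> 2" and "bounded K"
  shows "bounded (cyl_hull K)"
proof -
  obtain R where R: "R > 0" "\<And>x. x \<in> K \<Longrightarrow> norm x \<le> R"
    using assms(2) bounded_pos by blast
  obtain b1 where b1: "b1 \<in> (Basis :: 'a set)"
    by (metis all_not_in_conv nonempty_Basis)
  have "card (Basis - {b1} :: 'a set) \<ge> 1" using assms(1) b1 by simp
  then obtain b2 where b2: "b2 \<in> (Basis :: 'a set)" "b2 \<noteq> b1"
    by (metis Diff_iff card.empty ex_in_conv insert_iff not_one_le_zero)
  have Kc: "K \<subseteq> solid_cyl b R" if "b \<in> Basis" for b :: 'a
    using R that sb_le_norm[of b] unfolding solid_cyl_def by (force intro: order_trans)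
  have "norm x \<le> 2 * R" if x: "x \<in> cyl_hull K" for x
  proof -
    have c1: "norm (x - (x \<bullet> b1) *\<^sub>R b1) \<le> R"
      using in_hull_cyl[OF x _ R(1) Kc[OF b1]] b1 by (simp add: solid_cyl_def sb_eq)
    have c2: "norm (x - (x \<bullet> b2) *\<^sub>R b2) \<le> R"
      using in_hull_cyl[OF x _ R(1) Kc[OF b2(1)]] b2 by (simp add: solid_cyl_def sb_eq)
    have "(x - (x \<bullet> b2) *\<^sub>R b2) \<bullet> b1 = x \<bullet> b1"
      using b1 b2 by (simp add: inner_diff_left inner_Basis)
    then have "\<bar>x \<bullet> b1\<bar> \<le> R" using Basis_le_norm[OF b1, of "x - (x \<bullet> b2) *\<^sub>R b2"] c2 by simp
    then have "norm ((x \<bullet> b1) *\<^sub>R b1) \<le> R" using b1 by simp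
    moreover have "norm x \<le> norm (x - (x \<bullet> b1) *\<^sub>R b1) + norm ((x \<bullet> b1) *\<^sub>R b1)"
      by (metis diff_add_cancel norm_triangle_ineq)
    ultimately show ?thesis using c1 by simp
  qed
  then show ?thesis unfolding bounded_iff by blast
qed

lemma hull_interior:
  fixes K :: "'a::euclidean_space set"
  assumes "\<not> (\<exists>v. K \<subseteq> span {v})"
  shows "0 \<in> interior (cyl_hull K)"
proof -
  obtain y1 where y1: "y1 \<in> K" "y1 \<noteq> 0"
    using assms[unfolded not_ex, rule_format, of 0] by auto
  obtain y2 where y2: "y2 \<in> K" "y2 \<notin> span {y1}"
    using assms[unfolded not_ex, rule_format, of y1] by auto
  define f where "f u = max (sine_br y1 u) (sine_br y2 u)" for u
  have "continuous_on (sphere 0 1) f"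
    unfolding f_def by (intro continuous_on_max sb_cont)
  then obtain u0 where u0: "u0 \<in> sphere (0::'a) 1" "\<And>u. u \<in> sphere 0 1 \<Longrightarrow> f u0 \<le> f u"
    using continuous_attains_inf[of "sphere (0::'a) 1" f] by auto
  have nu0: "norm u0 = 1" using u0(1) by simp
  have pos: "f u0 > 0"
  proof (rule ccontr)
    assume "\<not> f u0 > 0"
    then have "sine_br y1 u0 \<le> 0" "sine_br y2 u0 \<le> 0" unfolding f_def by auto
    then have e1: "y1 = (y1 \<bullet> u0) *\<^sub>R u0" and e2: "y2 = (y2 \<bullet> u0) *\<^sub>R u0"
      using sb_nonneg[OF nu0] by (auto simp: sb_eq[OF nu0])
    define c where "c = y1 \<bullet> u0"
    define d where "d = y2 \<bullet> u0"
    have e1': "y1 = c *\<^sub>R u0" using e1 unfolding c_def .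
    have e2': "y2 = d *\<^sub>R u0" using e2 unfolding d_def .
    have c: "c \<noteq> 0" using e1' y1(2) by auto
    have "(d / c) *\<^sub>R y1 = d *\<^sub>R u0" using c by (simp add: e1')
    then have "y2 = (d / c) *\<^sub>R y1" using e2' by simp
    then have "y2 \<in> span {y1}" by (simp add: span_singleton image_iff)
    then show False using y2(2) by simp
  qed
  have "ball 0 (f u0) \<subseteq> cyl_hull K"
  proof
    fix x :: 'a assume x: "x \<in> ball 0 (f u0)"
    show "x \<in> cyl_hull K"
      unfolding cyl_hull_def closed_solid_cylinders_def
    proof (safe)
      fix u r assume u: "norm u = (1::real)" and r: "0 < r" and K: "K \<subseteq> solid_cyl u r"
      have "f u \<le> r" using K y1(1) y2(1) unfolding f_def solid_cyl_def by auto
      moreover have "f u0 \<le> f u" using u0(2)[of u] u by simp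
      moreover have "sine_br x u \<le> norm x" using sb_le_norm[OF u] .
      ultimately show "x \<in> solid_cyl u r" using x unfolding solid_cyl_def by simp
    qed
  qed
  then show ?thesis using pos mem_interior by blast
qed

lemma hull_Ce:
  fixes K :: "'a::euclidean_space set"
  assumes "DIM('a) \<ge> 2" and "bounded K" and "\<not> (\<exists>v. K \<subseteq> span {v})"
  shows "cyl_hull K \<in> Ce"
proof -
  have "compact (cyl_hull K)"
    using hull_closed hull_bounded[OF assms(1,2)] compact_eq_bounded_closed by blast
  moreover have "interior (cyl_hull K) \<noteq> {}" using hull_interior[OF assms(3)] by auto
  moreover have "cyl_hull K = \<Inter>{C \<in> closed_solid_cylinders. K \<subseteq> C}"
    unfolding cyl_hull_def ..
  ultimately have "convex_body (cyl_hull K) \<and> uminus ` cyl_hull K = cyl_hull K \<and>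
      (\<exists>F. F \<subseteq> closed_solid_cylinders \<and> cyl_hull K = \<Inter>F)"
    unfolding convex_body_def using hull_convex hull_sym
    by (metis (no_types, lifting) mem_Collect_eq subsetI)
  then show ?thesis unfolding Ce_def by (rule CollectI)
qed

theorem proposition3p5:
  fixes K :: "'a::euclidean_space set"
  assumes "DIM('a) \<ge> 2"
    and "bounded K"
    and "\<not> (\<exists>v. K \<subseteq> span {v})"
  shows "(K \<in> Ce \<longleftrightarrow> K = cyl_hull K) \<and> sine_polar (sine_polar K) = cyl_hull K"
proof -
  have "K \<in> Ce \<longleftrightarrow> K = cyl_hull K"
  proof
    assume "K \<in> Ce"
    then obtain F where F: "F \<subseteq> closed_solid_cylinders" "K = \<Inter>F" unfolding Ce_def by blast
    have "cyl_hull K \<subseteq> K"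
      unfolding cyl_hull_def using F by blast
    moreover have "K \<subseteq> cyl_hull K" unfolding cyl_hull_def by blast
    ultimately show "K = cyl_hull K" by blast
  next
    assume "K = cyl_hull K"
    then show "K \<in> Ce" using hull_Ce[OF assms] by simp
  qed
  then show ?thesis using polar_polar by blast
qed

end
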